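(* Let $\Omega$, $d$ and $x_1^0,\dots,x_{m_1}^0$ be as in the context, let $v_M>0$ and $\epsilon>0$. Then there exists $t_\epsilon(v_M)>0$ such that for every $0<\tau_2\le t_\epsilon(v_M)$ there exists $l_\epsilon(\tau_2)>0$ with the following property: for all $1\le i\le m_1$ and all $(x,v)\in B(x_i^0,d)\times\overline{B(0,v_M)}$, if $X_s(x,v)\in\Omega_{l_\epsilon(\tau_2)}\cap B(x_i^0,d)$ for all $s\in[0,\tau_2]$, then $|V_s(x,v)-v|<\epsilon$ for all $s\in[0,t_\epsilon(v_M)]$.
   Context: $\Omega\subset\mathbb{R}^3$ is a connected bounded open set with $C^2$ boundary, $n$ the outward unit normal, $\Omega_\ell=\{x\in\Omega:d(x,\partial\Omega)<\ell\}$. There is $\delta(\Omega)>0$ such that for $0<d<\min\{1,\delta\}$ (fixed, also smaller than a uniform interior sphere radius $d_r$ of $\Omega$) there are $x_1^0,\dots,x_{m_1}^0\in\partial\Omega$ with $\partial\Omega\subset\bigcup_iB(x_i^0,d/8)$ and, for each $i$, an orthonormal basis $\{e_i^1,e_i^2,-n(x_i^0)\}$ and a $C^2$ function $\phi_i:\mathbb{R}^2\to\mathbb{R}$, $\phi_i(0)=0$, $\nabla\phi_i(0)=0$, $|\nabla\phi_i|<\frac1{100}$, such that in $B(x_i^0,3d)$ the boundary is the graph $\{x_i^0+u_1e_i^1+u_2e_i^2-\phi_i(u_1,u_2)n(x_i^0)\}$ and $\Omega$ the region $u_3>\phi_i$. $(X_s(x,v),V_s(x,v))$ denotes the position and velocity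 at time $s\ge0$ of the billiard (specular reflection) trajectory starting at $(x,v)$: it moves in straight lines with constant velocity in $\overline\Omega$ and, on hitting $\partial\Omega$ at a point $y$, the velocity $w$ is replaced by $w-2(w\cdot n(y))n(y)$ (trajectories with infinitely many rebounds in finite time or ending in grazing "stop" configurations form a null set). *)

theory Defs
  imports "HOL-Analysis.Analysis"
begin

definition grad2 :: "(real^2 \<Rightarrow> real) \<Rightarrow> real^2 \<Rightarrow> real^2" where
  "grad2 f u = (\<chi> k. frechet_derivative f (at u) (axis k 1))"

definition C2_fun :: "(real^2 \<Rightarrow> real) \<Rightarrow> bool" where
  "C2_fun f \<longleftrightarrow> (\<forall>u. f differentiable at u)
     \<and> (\<forall>k u. (\<lambda>w. grad2 f w $ k) differentiable at u)
     \<and> (\<forall>k. continuous_on UNIV (\<lambda>u. grad2 (\<lambda>w. grad2 f w $ k) u))"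

definition Omega_layer :: "(real^3) set \<Rightarrow> real \<Rightarrow> (real^3) set" where
  "Omega_layer \<Omega> l = {x \<in> \<Omega>. infdist x (frontier \<Omega>) < l}"

text \<open>Standing assumptions of the context: \<Omega> a connected bounded open (nonempty)
  set, boundary covered by the balls B(x0 i, d/8), i < m1, and in each B(x0 i, 3d)
  the boundary is the graph of the C^2 function phi i in the orthonormal frame
  {e1 i, e2 i, - n (x0 i)}, \<Omega> is the region above the graph, and n is the
  outward unit normal (given in the chart by the usual formula); moreover
  0 < d < 1 and d is smaller than a uniform interior sphere radius.\<close>
definition billiard_setting ::
  "(real^3) set \<Rightarrow> (real^3 \<Rightarrow> real^3) \<Rightarrow> real \<Rightarrow> nat \<Rightarrow> (nat \<Rightarrow> real^3)
   \<Rightarrow> (nat \<Rightarrow> real^3) \<Rightarrow> (nat \<Rightarrow> real^3) \<Rightarrow> (nat \<Rightarrow> real^2 \<Rightarrow> real) \<Rightarrow> bool" where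
  "billiard_setting \<Omega> n d m1 x0 e1 e2 \<phi> \<longleftrightarrow>
     open \<Omega> \<and> bounded \<Omega> \<and> connected \<Omega> \<and> \<Omega> \<noteq> {} \<and>
     0 < d \<and> d < 1 \<and>
     (\<exists>dr. d < dr \<and> (\<forall>y\<in>frontier \<Omega>. ball (y - dr *\<^sub>R n y) dr \<subseteq> \<Omega>)) \<and>
     frontier \<Omega> \<subseteq> (\<Union>i<m1. ball (x0 i) (d/8)) \<and>
     (\<forall>i<m1.
        x0 i \<in> frontier \<Omega> \<and>
        norm (e1 i) = 1 \<and> norm (e2 i) = 1 \<and> norm (n (x0 i)) = 1 \<and>
        e1 i \<bullet> e2 i = 0 \<and> e1 i \<bullet> n (x0 i) = 0 \<and> e2 i \<bullet> n (x0 i) = 0 \<and>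
        C2_fun (\<phi> i) \<and> \<phi> i 0 = 0 \<and> grad2 (\<phi> i) 0 = 0 \<and>
        (\<forall>u. norm (grad2 (\<phi> i) u) < 1/100) \<and>
        frontier \<Omega> \<inter> ball (x0 i) (3*d) =
          {x0 i + (u$1) *\<^sub>R e1 i + (u$2) *\<^sub>R e2 i - (\<phi> i u) *\<^sub>R n (x0 i) | u. True}
          \<inter> ball (x0 i) (3*d) \<and>
        \<Omega> \<inter> ball (x0 i) (3*d) =
          {x0 i + (u$1) *\<^sub>R e1 i + (u$2) *\<^sub>R e2 i - u3 *\<^sub>R n (x0 i) | u u3. u3 > \<phi> i u}
          \<inter> ball (x0 i) (3*d) \<and>
        (\<forall>u. x0 i + (u$1) *\<^sub>R e1 i + (u$2) *\<^sub>R e2 i - (\<phi> i u) *\<^sub>R n (x0 i)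
                \<in> ball (x0 i) (3*d) \<longrightarrow>
             n (x0 i + (u$1) *\<^sub>R e1 i + (u$2) *\<^sub>R e2 i - (\<phi> i u) *\<^sub>R n (x0 i)) =
             (1 / sqrt (1 + (norm (grad2 (\<phi> i) u))\<^sup>2)) *\<^sub>R
               ((grad2 (\<phi> i) u $ 1) *\<^sub>R e1 i + (grad2 (\<phi> i) u $ 2) *\<^sub>R e2 i + n (x0 i))))"

text \<open>(X, V) is a billiard (specular reflection) trajectory in \<Omega> starting at (x, v),
  defined for all times s \<ge> 0, with a locally finite set B of rebound times:
  X is continuous, stays in the closure of \<Omega>, has right derivative V; V is
  constant between rebounds (right-continuous), and at a rebound time b the point
  X b lies on the boundary and the incoming velocity w (left limit of V) is
  replaced by w - 2 (w . n(X b)) n(X b).\<close>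
definition billiard_traj ::
  "(real^3) set \<Rightarrow> (real^3 \<Rightarrow> real^3) \<Rightarrow> real^3 \<Rightarrow> real^3
   \<Rightarrow> (real \<Rightarrow> real^3) \<Rightarrow> (real \<Rightarrow> real^3) \<Rightarrow> bool" where
  "billiard_traj \<Omega> n x v X V \<longleftrightarrow>
     X 0 = x \<and> V 0 = v \<and> continuous_on {0..} X \<and>
     (\<forall>s\<ge>0. X s \<in> closure \<Omega>) \<and>
     (\<forall>s\<ge>0. (X has_vector_derivative V s) (at s within {s..})) \<and>
     (\<exists>B. B \<subseteq> {0<..} \<and> (\<forall>T. finite (B \<inter> {..T})) \<and>
        (\<forall>s t. 0 \<le> s \<and> s \<le> t \<and> B \<inter> {s<..t} = {} \<longrightarrow> V t = V s) \<and>
        (\<forall>b\<in>B. X b \<in> frontier \<Omega> \<and>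
           (\<exists>w. (V \<longlongrightarrow> w) (at_left b) \<and>
                V b = w - (2 * (w \<bullet> n (X b))) *\<^sub>R n (X b))))"

end

theory Submission
  imports Defs "HOL-Analysis.Analysis"
begin

lemma rind_aux:
  fixes f :: "real \<Rightarrow> real"
  assumes ab: "a \<le> b" and z: "\<zeta> > 0"
  and R: "\<And>t \<eta>. a \<le> t \<Longrightarrow> t < b \<Longrightarrow> \<eta> > 0 \<Longrightarrow> \<exists>\<delta>>0. \<forall>s. t < s \<and> s < t + \<delta> \<longrightarrow> f s \<le> f t + \<eta> * (s - t)"
  and L: "\<And>t \<eta>. a < t \<Longrightarrow> t \<le> b \<Longrightarrow> \<eta> > 0 \<Longrightarrow> \<exists>\<delta>>0. \<forall>s. t - \<delta> < s \<and> s < t \<longrightarrow> f t \<le> f s + \<eta>"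
  shows "f b \<le> f a + \<zeta> * (b - a)"
proof -
  define S where "S = {t. a \<le> t \<and> t \<le> b \<and> (\<forall>u. a \<le> u \<and> u \<le> t \<longrightarrow> f u \<le> f a + \<zeta> * (u - a))}"
  define c where "c = Sup S"
  have aS: "a \<in> S" using ab by (auto simp: S_def)
  have bdd: "bdd_above S" by (auto simp: S_def bdd_above_def)
  have ac: "a \<le> c" using aS bdd by (simp add: c_def cSup_upper)
  have cb: "c \<le> b" unfolding c_def using aS by (intro cSup_least) (auto simp: S_def)
  have below: "f u \<le> f a + \<zeta> * (u - a)" if "a \<le> u" "u < c" for u
  proof -
    obtain t where "t \<in> S" "u < t" using \<open>u < c\<close> aS unfolding c_def
      by (metis less_cSupD empty_iff)
    then show ?thesis using that by (auto simp: S_def)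
  qed
  have fc: "f c \<le> f a + \<zeta> * (c - a)"
  proof (cases "c = a")
    case True then show ?thesis by simp
  next
    case False
    hence ac': "a < c" using ac by simp
    show ?thesis
    proof (rule field_le_epsilon)
      fix e :: real assume "e > 0"
      obtain \<delta> where d: "\<delta> > 0" "\<forall>s. c - \<delta> < s \<and> s < c \<longrightarrow> f c \<le> f s + e"
        using L[OF ac' cb \<open>e>0\<close>] by blast
      define s where "s = max (c - \<delta>/2) ((a + c)/2)"
      have s: "c - \<delta> < s" "s < c" "a \<le> s" using d ac' by (auto simp: s_def max_def)
      have "f c \<le> f s + e" using d s by auto
      also have "\<dots> \<le> f a + \<zeta> * (s - a) + e" using below[OF s(3) s(2)] by simp
      also have "\<dots> \<le> f a + \<zeta> * (c - a) + e" using s z by (simp add: mult_left_mono)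
      finally show "f c \<le> f a + \<zeta> * (c - a) + e" .
    qed
  qed
  have cS: "c \<in> S"
    unfolding S_def
  proof (intro CollectI conjI allI impI ac cb)
    fix u assume "a \<le> u \<and> u \<le> c"
    then show "f u \<le> f a + \<zeta> * (u - a)" using below fc
      by (cases "u = c") auto
  qed
  have "c = b"
  proof (rule ccontr)
    assume "c \<noteq> b"
    hence cb': "c < b" using cb by simp
    obtain \<delta> where d: "\<delta> > 0" "\<forall>s. c < s \<and> s < c + \<delta> \<longrightarrow> f s \<le> f c + \<zeta> * (s - c)"
      using R[OF ac cb' z] by blast
    define t where "t = min (c + \<delta>/2) b"
    have "t \<in> S"
      unfolding S_def
    proof (intro CollectI conjI allI impI)
      show "a \<le> t" "t \<le> b" using ac cb' d by (auto simp: t_def)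
      fix u assume u: "a \<le> u \<and> u \<le> t"
      show "f u \<le> f a + \<zeta> * (u - a)"
      proof (cases "u \<le> c")
        case True then show ?thesis using cS u by (auto simp: S_def)
      next
        case False
        hence "f u \<le> f c + \<zeta> * (u - c)" using d u by (auto simp: t_def)
        then show ?thesis using fc by (simp add: algebra_simps)
      qed
    qed
    hence "t \<le> c" using bdd by (simp add: c_def cSup_upper)
    then show False using cb' d by (auto simp: t_def)
  qed
  then show ?thesis using fc by simp
qed

lemma rind:
  fixes f :: "real \<Rightarrow> real"
  assumes ab: "a \<le> b"
  and R: "\<And>t \<eta>. a \<le> t \<Longrightarrow> t < b \<Longrightarrow> \<eta> > 0 \<Longrightarrow> \<exists>\<delta>>0. \<forall>s. t < s \<and> s < t + \<delta> \<longrightarrow> f s \<le> f t + \<eta> * (s - t)"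
  and L: "\<And>t \<eta>. a < t \<Longrightarrow> t \<le> b \<Longrightarrow> \<eta> > 0 \<Longrightarrow> \<exists>\<delta>>0. \<forall>s. t - \<delta> < s \<and> s < t \<longrightarrow> f t \<le> f s + \<eta>"
  shows "f b \<le> f a"
proof (rule field_le_epsilon)
  fix e :: real assume e: "e > 0"
  define z where "z = e / (b - a + 1)"
  have z: "z > 0" using e ab by (simp add: z_def)
  have "f b \<le> f a + z * (b - a)" by (rule rind_aux[OF ab z R L]) auto
  also have "z * (b - a) \<le> e" using e ab by (simp add: z_def field_simps)
  finally show "f b \<le> f a + e" by simp
qed

definition Uc :: "real^3 \<Rightarrow> real^3 \<Rightarrow> real^3 \<Rightarrow> real^3 \<Rightarrow> real^2" where
  "Uc x0 e1 e2 y = (\<chi> j. if j = 1 then (y - x0) \<bullet> e1 else (y - x0) \<bullet> e2)"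

definition Hc :: "real^3 \<Rightarrow> real^3 \<Rightarrow> real^3 \<Rightarrow> real^3 \<Rightarrow> (real^2 \<Rightarrow> real) \<Rightarrow> real^3 \<Rightarrow> real" where
  "Hc x0 e1 e2 n0 f y = - ((y - x0) \<bullet> n0) - f (Uc x0 e1 e2 y)"

definition Nc :: "real^3 \<Rightarrow> real^3 \<Rightarrow> real^3 \<Rightarrow> real^3 \<Rightarrow> (real^2 \<Rightarrow> real) \<Rightarrow> real^3 \<Rightarrow> real^3" where
  "Nc x0 e1 e2 n0 f y = (grad2 f (Uc x0 e1 e2 y) $ 1) *\<^sub>R e1 + (grad2 f (Uc x0 e1 e2 y) $ 2) *\<^sub>R e2 + n0"

lemma Uc_1[simp]: "Uc x0 e1 e2 y $ 1 = (y - x0) \<bullet> e1" and Uc_2[simp]: "Uc x0 e1 e2 y $ 2 = (y - x0) \<bullet> e2"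
  by (simp_all add: Uc_def)

lemma vec2_decomp: "(k::real^2) = (k$1) *\<^sub>R axis 1 1 + (k$2) *\<^sub>R axis 2 1"
  by (simp add: vec_eq_iff forall_2 axis_def)

lemma grad_deriv:
  assumes "f differentiable (at u)"
  shows "(f has_derivative (\<lambda>k. k$1 * grad2 f u $ 1 + k$2 * grad2 f u $ 2)) (at u)"
proof -
  let ?L = "frechet_derivative f (at u)"
  have d: "(f has_derivative ?L) (at u)" using assms frechet_derivative_works by blast
  have lin: "linear ?L" using d has_derivative_linear by blast
  have "?L k = k$1 * grad2 f u $ 1 + k$2 * grad2 f u $ 2" for k
  proof -
    have "?L k = ?L ((k$1) *\<^sub>R axis 1 1 + (k$2) *\<^sub>R axis 2 1)" by (subst vec2_decomp) simp
    also have "\<dots> = k$1 * ?L (axis 1 1) + k$2 * ?L (axis 2 1)"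
      using lin by (simp add: linear_add linear_scale)
    finally show ?thesis by (simp add: grad2_def)
  qed
  then have "?L = (\<lambda>k. k$1 * grad2 f u $ 1 + k$2 * grad2 f u $ 2)" by auto
  then show ?thesis using d by simp
qed

lemma Uc_deriv: "(Uc x0 e1 e2 has_derivative Uc 0 e1 e2) (at y)"
proof -
  have lin: "linear (Uc 0 e1 e2)"
    by (rule linearI) (simp_all add: vec_eq_iff forall_2 inner_add_left)
  then have bl: "bounded_linear (Uc 0 e1 e2)" by (simp add: linear_conv_bounded_linear)
  have eq: "Uc x0 e1 e2 = (\<lambda>y. Uc 0 e1 e2 y - Uc 0 e1 e2 x0)"
    by (rule ext) (simp add: vec_eq_iff forall_2 inner_diff_left)
  show ?thesis unfolding eq
    using bounded_linear.has_derivative[OF bl, of "\<lambda>y. y" "\<lambda>y. y"]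
    by (auto intro!: derivative_eq_intros)
qed

lemma Hc_deriv:
  assumes "f differentiable (at (Uc x0 e1 e2 y))"
  shows "(Hc x0 e1 e2 n0 f has_derivative (\<lambda>h. - (h \<bullet> Nc x0 e1 e2 n0 f y))) (at y)"
proof -
  have c: "((\<lambda>y. f (Uc x0 e1 e2 y)) has_derivative
     (\<lambda>h. (h \<bullet> e1) * grad2 f (Uc x0 e1 e2 y) $ 1 + (h \<bullet> e2) * grad2 f (Uc x0 e1 e2 y) $ 2)) (at y)"
    using has_derivative_compose[OF Uc_deriv grad_deriv[OF assms]] by (simp add: Uc_def)
  have "(Hc x0 e1 e2 n0 f has_derivative (\<lambda>h. - (h \<bullet> n0) - ((h \<bullet> e1) * grad2 f (Uc x0 e1 e2 y) $ 1 + (h \<bullet> e2) * grad2 f (Uc x0 e1 e2 y) $ 2))) (at y)"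
  proof -
    have l: "((\<lambda>y. -((y - x0) \<bullet> n0)) has_derivative (\<lambda>h. -(h \<bullet> n0))) (at y)"
      by (auto intro!: derivative_eq_intros)
    show ?thesis unfolding Hc_def[abs_def] using has_derivative_diff[OF l c] by simp
  qed
  moreover have "(\<lambda>h. - (h \<bullet> n0) - ((h \<bullet> e1) * grad2 f (Uc x0 e1 e2 y) $ 1 + (h \<bullet> e2) * grad2 f (Uc x0 e1 e2 y) $ 2))
     = (\<lambda>h. - (h \<bullet> Nc x0 e1 e2 n0 f y))"
    by (rule ext) (simp add: Nc_def inner_add_right algebra_simps)
  ultimately show ?thesis by simp
qed

lemma comp_deriv:
  fixes g :: "real^2 \<Rightarrow> real"
  assumes "g differentiable (at (Uc x0 e1 e2 y))"
  shows "((\<lambda>y. g (Uc x0 e1 e2 y)) has_derivative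
     (\<lambda>h. (h \<bullet> e1) * grad2 g (Uc x0 e1 e2 y) $ 1 + (h \<bullet> e2) * grad2 g (Uc x0 e1 e2 y) $ 2)) (at y)"
  using has_derivative_compose[OF Uc_deriv grad_deriv[OF assms]] by (simp add: Uc_def)

lemma lin2_bound:
  fixes a :: "real^2" and h e1 e2 :: "real^3"
  assumes "norm e1 = 1" "norm e2 = 1"
  shows "\<bar>(h \<bullet> e1) * a $ 1 + (h \<bullet> e2) * a $ 2\<bar> \<le> 2 * norm a * norm h"
proof -
  have "\<bar>h \<bullet> e1\<bar> \<le> norm h" "\<bar>h \<bullet> e2\<bar> \<le> norm h"
    using Cauchy_Schwarz_ineq2[of h e1] Cauchy_Schwarz_ineq2[of h e2] assms by auto
  moreover have "\<bar>a $ 1\<bar> \<le> norm a" "\<bar>a $ 2\<bar> \<le> norm a" by (rule component_le_norm_cart)+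
  ultimately have "\<bar>h \<bullet> e1\<bar> * \<bar>a $ 1\<bar> \<le> norm h * norm a" "\<bar>h \<bullet> e2\<bar> * \<bar>a $ 2\<bar> \<le> norm h * norm a"
    by (auto intro!: mult_mono)
  moreover have "norm h * norm a = norm a * norm h" by simp
  ultimately show ?thesis using abs_triangle_ineq[of "(h \<bullet> e1) * a $ 1" "(h \<bullet> e2) * a $ 2"]
    unfolding abs_mult by linarith
qed

lemma qN_deriv:
  fixes f :: "real^2 \<Rightarrow> real"
  assumes d1: "(\<lambda>w. grad2 f w $ 1) differentiable (at (Uc x0 e1 e2 y))"
    and d2: "(\<lambda>w. grad2 f w $ 2) differentiable (at (Uc x0 e1 e2 y))"
    and e: "norm e1 = 1" "norm e2 = 1"
  shows "\<exists>D. ((\<lambda>y. c \<bullet> Nc x0 e1 e2 n0 f y) has_derivative D) (at y) \<and>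
    (\<forall>h. \<bar>D h\<bar> \<le> 2 * (norm (grad2 (\<lambda>w. grad2 f w $ 1) (Uc x0 e1 e2 y))
         + norm (grad2 (\<lambda>w. grad2 f w $ 2) (Uc x0 e1 e2 y))) * norm c * norm h)"
proof -
  define a1 where "a1 = grad2 (\<lambda>w. grad2 f w $ 1) (Uc x0 e1 e2 y)"
  define a2 where "a2 = grad2 (\<lambda>w. grad2 f w $ 2) (Uc x0 e1 e2 y)"
  note D1 = comp_deriv[OF d1, folded a1_def]
  note D2 = comp_deriv[OF d2, folded a2_def]
  define D where "D = (\<lambda>h. ((h \<bullet> e1) * a1 $ 1 + (h \<bullet> e2) * a1 $ 2) * (c \<bullet> e1)
     + ((h \<bullet> e1) * a2 $ 1 + (h \<bullet> e2) * a2 $ 2) * (c \<bullet> e2))"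
  have eq: "(\<lambda>y. c \<bullet> Nc x0 e1 e2 n0 f y) = (\<lambda>y. grad2 f (Uc x0 e1 e2 y) $ 1 * (c \<bullet> e1)
     + grad2 f (Uc x0 e1 e2 y) $ 2 * (c \<bullet> e2) + c \<bullet> n0)"
    by (rule ext) (simp add: Nc_def inner_add_right)
  have "((\<lambda>y. c \<bullet> Nc x0 e1 e2 n0 f y) has_derivative D) (at y)"
    unfolding eq D_def
    using has_derivative_add[OF has_derivative_add[OF has_derivative_mult_right[OF D1, of "c \<bullet> e1"]
        has_derivative_mult_right[OF D2, of "c \<bullet> e2"]] has_derivative_const[of "c \<bullet> n0"]]
    by (simp add: mult.commute)
  moreover have "\<bar>D h\<bar> \<le> 2 * (norm a1 + norm a2) * norm c * norm h" for h
  proof -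
    have ce: "\<bar>c \<bullet> e1\<bar> \<le> norm c" "\<bar>c \<bullet> e2\<bar> \<le> norm c"
      using Cauchy_Schwarz_ineq2[of c e1] Cauchy_Schwarz_ineq2[of c e2] e by auto
    have b1: "\<bar>((h \<bullet> e1) * a1 $ 1 + (h \<bullet> e2) * a1 $ 2) * (c \<bullet> e1)\<bar> \<le> (2 * norm a1 * norm h) * norm c"
      unfolding abs_mult by (rule mult_mono[OF lin2_bound[OF e] ce(1)]) auto
    have b2: "\<bar>((h \<bullet> e1) * a2 $ 1 + (h \<bullet> e2) * a2 $ 2) * (c \<bullet> e2)\<bar> \<le> (2 * norm a2 * norm h) * norm c"
      unfolding abs_mult by (rule mult_mono[OF lin2_bound[OF e] ce(2)]) auto
    show ?thesis unfolding D_def using b1 b2 by (simp add: algebra_simps)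
  qed
  ultimately show ?thesis unfolding a1_def a2_def by blast
qed

definition orth3 :: "real^3 \<Rightarrow> real^3 \<Rightarrow> real^3 \<Rightarrow> bool" where
  "orth3 e1 e2 n0 \<longleftrightarrow> norm e1 = 1 \<and> norm e2 = 1 \<and> norm n0 = 1 \<and> e1 \<bullet> e2 = 0 \<and> e1 \<bullet> n0 = 0 \<and> e2 \<bullet> n0 = 0"

lemma orth3_inner:
  assumes "orth3 e1 e2 n0"
  shows "e1 \<bullet> e1 = 1" "e2 \<bullet> e2 = 1" "n0 \<bullet> n0 = 1" "e1 \<bullet> e2 = 0" "e1 \<bullet> n0 = 0" "e2 \<bullet> n0 = 0"
    "e2 \<bullet> e1 = 0" "n0 \<bullet> e1 = 0" "n0 \<bullet> e2 = 0"
  using assms unfolding orth3_def by (auto simp: inner_commute norm_eq_1)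

lemma Uc_pt:
  assumes "orth3 e1 e2 n0"
  shows "Uc x0 e1 e2 (x0 + a *\<^sub>R e1 + b *\<^sub>R e2 - t *\<^sub>R n0) = (\<chi> j. if j = 1 then a else b)"
  using orth3_inner[OF assms] by (simp add: vec_eq_iff forall_2 inner_add_left inner_diff_left)

lemma vec2_chi: "(\<chi> j. if j = 1 then (u::real^2) $ 1 else u $ 2) = u"
  by (simp add: vec_eq_iff forall_2)

lemma Hc_pt:
  assumes "orth3 e1 e2 n0"
  shows "Hc x0 e1 e2 n0 f (x0 + (u$1) *\<^sub>R e1 + (u$2) *\<^sub>R e2 - t *\<^sub>R n0) = t - f u"
  using orth3_inner[OF assms] Uc_pt[OF assms, of x0 "u$1" "u$2" t]
  by (simp add: Hc_def vec2_chi inner_add_left inner_diff_left)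

lemma norm2_vec2: "(norm (g::real^2))^2 = (g$1)^2 + (g$2)^2"
  by (simp add: norm_vec_def L2_set_def sum_2)

lemma norm_comb:
  assumes "orth3 e1 e2 n0"
  shows "(norm (a *\<^sub>R e1 + b *\<^sub>R e2 + n0))^2 = 1 + a^2 + b^2"
  unfolding power2_norm_eq_inner using orth3_inner[OF assms]
  by (simp add: inner_add_left inner_add_right power2_eq_square algebra_simps)

lemma Nc_norm2:
  assumes "orth3 e1 e2 n0"
  shows "(norm (Nc x0 e1 e2 n0 f y))^2 = 1 + (norm (grad2 f (Uc x0 e1 e2 y)))^2"
  unfolding Nc_def norm_comb[OF assms] norm2_vec2 by simp

lemma Nc_bounds:
  assumes "orth3 e1 e2 n0" "norm (grad2 f (Uc x0 e1 e2 y)) < 1/100"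
  shows "1 \<le> norm (Nc x0 e1 e2 n0 f y)" "norm (Nc x0 e1 e2 n0 f y) \<le> 2"
proof -
  let ?N = "norm (Nc x0 e1 e2 n0 f y)" and ?g = "norm (grad2 f (Uc x0 e1 e2 y))"
  have e: "?N^2 = 1 + ?g^2" by (rule Nc_norm2[OF assms(1)])
  have g: "?g^2 \<le> 1" using assms(2) norm_ge_zero[of "grad2 f (Uc x0 e1 e2 y)"]
    by (intro power_le_one) auto
  have "1 \<le> ?N^2" using e by simp
  then show "1 \<le> ?N" using power2_le_imp_le[of 1 ?N] by simp
  have "?N^2 \<le> 2^2" using e g by simp
  then show "?N \<le> 2" by (rule power2_le_imp_le) simp
qed

lemma chart:
  assumes bs: "billiard_setting \<Omega> n d m1 x0 e1 e2 \<phi>" and i: "i < m1"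
  shows "orth3 (e1 i) (e2 i) (n (x0 i))" "C2_fun (\<phi> i)" "\<forall>u. norm (grad2 (\<phi> i) u) < 1/100"
    and "\<And>y. y \<in> frontier \<Omega> \<Longrightarrow> y \<in> ball (x0 i) (3*d) \<Longrightarrow>
        Hc (x0 i) (e1 i) (e2 i) (n (x0 i)) (\<phi> i) y = 0 \<and>
        n y = (1 / norm (Nc (x0 i) (e1 i) (e2 i) (n (x0 i)) (\<phi> i) y)) *\<^sub>R Nc (x0 i) (e1 i) (e2 i) (n (x0 i)) (\<phi> i) y"
    and "\<And>y. y \<in> \<Omega> \<Longrightarrow> y \<in> ball (x0 i) (3*d) \<Longrightarrow> Hc (x0 i) (e1 i) (e2 i) (n (x0 i)) (\<phi> i) y > 0"
proof -
  note B = bs[unfolded billiard_setting_def, THEN conjunct2, THEN conjunct2, THEN conjunct2, THEN conjunct2,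
     THEN conjunct2, THEN conjunct2, THEN conjunct2, THEN conjunct2, rule_format, OF i]
  show o: "orth3 (e1 i) (e2 i) (n (x0 i))" using B by (simp add: orth3_def)
  show "C2_fun (\<phi> i)" "\<forall>u. norm (grad2 (\<phi> i) u) < 1/100" using B by auto
  let ?N = "Nc (x0 i) (e1 i) (e2 i) (n (x0 i)) (\<phi> i)"
  fix y
  { assume y: "y \<in> frontier \<Omega>" "y \<in> ball (x0 i) (3*d)"
    then obtain u where u: "y = x0 i + (u$1) *\<^sub>R e1 i + (u$2) *\<^sub>R e2 i - (\<phi> i u) *\<^sub>R n (x0 i)"
      using B by blast
    have U: "Uc (x0 i) (e1 i) (e2 i) y = u" using Uc_pt[OF o] vec2_chi u by simp
    have H: "Hc (x0 i) (e1 i) (e2 i) (n (x0 i)) (\<phi> i) y = 0" using Hc_pt[OF o] u by simp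
    have ny: "n y = (1 / sqrt (1 + (norm (grad2 (\<phi> i) u))\<^sup>2)) *\<^sub>R
               ((grad2 (\<phi> i) u $ 1) *\<^sub>R e1 i + (grad2 (\<phi> i) u $ 2) *\<^sub>R e2 i + n (x0 i))"
      using B y u by auto
    have "norm (?N y) = sqrt (1 + (norm (grad2 (\<phi> i) u))\<^sup>2)"
      using Nc_norm2[OF o, of "x0 i" "\<phi> i" y] U by (metis norm_ge_zero real_sqrt_unique)
    then have "n y = (1 / norm (?N y)) *\<^sub>R ?N y" using ny U by (simp add: Nc_def)
    with H show "Hc (x0 i) (e1 i) (e2 i) (n (x0 i)) (\<phi> i) y = 0 \<and> n y = (1 / norm (?N y)) *\<^sub>R ?N y" by simp
  }
  { assume y: "y \<in> \<Omega>" "y \<in> ball (x0 i) (3*d)"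
    then obtain u u3 where u: "y = x0 i + (u$1) *\<^sub>R e1 i + (u$2) *\<^sub>R e2 i - u3 *\<^sub>R n (x0 i)" "u3 > \<phi> i u"
      using B by blast
    then show "Hc (x0 i) (e1 i) (e2 i) (n (x0 i)) (\<phi> i) y > 0" using Hc_pt[OF o] by simp
  }
qed

lemma setting_basic:
  assumes bs: "billiard_setting \<Omega> n d m1 x0 e1 e2 \<phi>"
  shows "open \<Omega>" "0 < d" "d < 1" "frontier \<Omega> \<subseteq> (\<Union>i<m1. ball (x0 i) (d/8))"
    "\<And>i. i < m1 \<Longrightarrow> x0 i \<in> frontier \<Omega>"
  using bs unfolding billiard_setting_def by auto

lemma n_unit:
  assumes bs: "billiard_setting \<Omega> n d m1 x0 e1 e2 \<phi>" and y: "y \<in> frontier \<Omega>"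
  shows "norm (n y) = 1"
proof -
  obtain j where j: "j < m1" "y \<in> ball (x0 j) (d/8)" using setting_basic(4)[OF bs] y by blast
  have "y \<in> ball (x0 j) (3*d)" using j setting_basic(2)[OF bs] by (auto simp: dist_commute)
  then have e: "n y = (1 / norm (Nc (x0 j) (e1 j) (e2 j) (n (x0 j)) (\<phi> j) y)) *\<^sub>R Nc (x0 j) (e1 j) (e2 j) (n (x0 j)) (\<phi> j) y"
    using chart(4)[OF bs j(1) y] by blast
  have "1 \<le> norm (Nc (x0 j) (e1 j) (e2 j) (n (x0 j)) (\<phi> j) y)"
    using Nc_bounds(1)[OF chart(1)[OF bs j(1)]] chart(3)[OF bs j(1)] by blast
  then have "Nc (x0 j) (e1 j) (e2 j) (n (x0 j)) (\<phi> j) y \<noteq> 0" by (metis norm_zero not_one_le_zero)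
  then show ?thesis unfolding e by simp
qed

lemma refl_norm:
  fixes w m :: "real^3"
  assumes "norm m = 1"
  shows "norm (w - (2 * (w \<bullet> m)) *\<^sub>R m) = norm w"
proof -
  have mm: "m \<bullet> m = 1" using assms by (simp add: norm_eq_1)
  have "(norm (w - (2 * (w \<bullet> m)) *\<^sub>R m))^2 = (norm w)^2"
    unfolding power2_norm_eq_inner
    by (simp add: inner_diff_left inner_diff_right mm inner_commute[of m w] algebra_simps power2_eq_square)
  then show ?thesis by (simp add: power2_eq_iff_nonneg)
qed

lemma C2_diff:
  assumes "C2_fun f"
  shows "\<And>u. f differentiable (at u)" "\<And>k u. (\<lambda>w. grad2 f w $ k) differentiable (at u)"
    "\<And>k. continuous_on UNIV (\<lambda>u. grad2 (\<lambda>w. grad2 f w $ k) u)"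
  using assms unfolding C2_fun_def by auto

lemma Uc_cont: "continuous_on UNIV (Uc x0 e1 e2)"
  by (rule continuous_at_imp_continuous_on, intro ballI has_derivative_continuous[OF Uc_deriv])

lemma Hc_cont:
  assumes "C2_fun f"
  shows "continuous_on UNIV (Hc x0 e1 e2 n0 f)"
  by (rule continuous_at_imp_continuous_on, intro ballI has_derivative_continuous[OF Hc_deriv[OF C2_diff(1)[OF assms]]])

lemma Nc_cont:
  assumes "C2_fun f"
  shows "continuous_on UNIV (Nc x0 e1 e2 n0 f)"
proof -
  have g: "continuous_on UNIV (\<lambda>y. grad2 f (Uc x0 e1 e2 y) $ k)" for k
  proof -
    have "continuous_on UNIV (\<lambda>w. grad2 f w $ k)"
      by (rule continuous_at_imp_continuous_on, intro ballI differentiable_imp_continuous_within C2_diff(2)[OF assms])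
    then show ?thesis using continuous_on_compose2[OF _ Uc_cont, of UNIV "\<lambda>w. grad2 f w $ k"] by simp
  qed
  show ?thesis unfolding Nc_def[abs_def]
    by (intro continuous_on_add continuous_on_scaleR g continuous_on_const)
qed

lemma Hc_lip:
  assumes "orth3 e1 e2 n0" "C2_fun f" "\<forall>u. norm (grad2 f u) < 1/100"
  shows "\<bar>Hc x0 e1 e2 n0 f y - Hc x0 e1 e2 n0 f z\<bar> \<le> 2 * norm (y - z)"
proof -
  have "norm (Hc x0 e1 e2 n0 f y - Hc x0 e1 e2 n0 f z) \<le> 2 * norm (y - z)"
  proof (rule differentiable_bound[where S=UNIV and f' = "\<lambda>y h. - (h \<bullet> Nc x0 e1 e2 n0 f y)"])
    show "convex (UNIV :: (real^3) set)" by simp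
    fix x :: "real^3"
    show "(Hc x0 e1 e2 n0 f has_derivative (\<lambda>h. - (h \<bullet> Nc x0 e1 e2 n0 f x))) (at x within UNIV)"
      using Hc_deriv[OF C2_diff(1)[OF assms(2)]] by simp
    show "onorm (\<lambda>h. - (h \<bullet> Nc x0 e1 e2 n0 f x)) \<le> 2"
    proof (rule onorm_le)
      fix h
      have "norm (- (h \<bullet> Nc x0 e1 e2 n0 f x)) \<le> norm h * norm (Nc x0 e1 e2 n0 f x)"
        using Cauchy_Schwarz_ineq2 by simp
      also have "\<dots> \<le> norm h * 2" using Nc_bounds(2)[OF assms(1)] assms(3) by (simp add: mult_left_mono)
      finally show "norm (- (h \<bullet> Nc x0 e1 e2 n0 f x)) \<le> 2 * norm h" by simp
    qed
  qed auto
  then show ?thesis by simp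
qed

lemma Hc_closure:
  assumes bs: "billiard_setting \<Omega> n d m1 x0 e1 e2 \<phi>" and i: "i < m1"
    and y: "y \<in> closure \<Omega>" "y \<in> ball (x0 i) (3*d)"
  shows "Hc (x0 i) (e1 i) (e2 i) (n (x0 i)) (\<phi> i) y \<ge> 0"
proof (rule ccontr)
  let ?H = "Hc (x0 i) (e1 i) (e2 i) (n (x0 i)) (\<phi> i)"
  assume "\<not> ?H y \<ge> 0"
  then have neg: "?H y < 0" by simp
  have "continuous (at y) ?H" using Hc_cont[OF chart(2)[OF bs i]] by (simp add: continuous_on_eq_continuous_at)
  then obtain r where r: "r > 0" "\<forall>z. dist z y < r \<longrightarrow> dist (?H z) (?H y) < - ?H y"
    using neg unfolding continuous_at_eps_delta by (meson neg_0_less_iff_less)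
  obtain r2 where r2: "r2 > 0" "ball y r2 \<subseteq> ball (x0 i) (3*d)"
    using y(2) open_ball openE by blast
  have "min r r2 > 0" using r r2 by simp
  then obtain z where z: "z \<in> \<Omega>" "dist z y < min r r2" using y(1) unfolding closure_approachable
    by blast
  have "z \<in> ball (x0 i) (3*d)" using z r2 by (auto simp: dist_commute)
  then have "?H z > 0" using chart(5)[OF bs i z(1)] by blast
  moreover have "dist (?H z) (?H y) < - ?H y" using r z by auto
  ultimately show False by (simp add: dist_real_def)
qed

lemma gap_right:
  fixes F :: "real set"
  assumes "finite F"
  shows "\<exists>\<delta>>0. \<forall>b\<in>F. b > t \<longrightarrow> t + \<delta> \<le> b"
  using assms
proof (induction F rule: finite_induct)
  case empty then show ?case by (auto intro: exI[of _ 1])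
next
  case (insert x F)
  then obtain \<delta> where d: "\<delta> > 0" "\<forall>b\<in>F. b > t \<longrightarrow> t + \<delta> \<le> b" by blast
  show ?case
  proof (cases "x > t")
    case True
    then show ?thesis using d by (intro exI[of _ "min \<delta> (x - t)"]) auto
  next
    case False
    then show ?thesis using d by (intro exI[of _ \<delta>]) auto
  qed
qed

lemma gap_left:
  fixes F :: "real set"
  assumes "finite F"
  shows "\<exists>\<delta>>0. \<forall>b\<in>F. b < t \<longrightarrow> b \<le> t - \<delta>"
  using assms
proof (induction F rule: finite_induct)
  case empty then show ?case by (auto intro: exI[of _ 1])
next
  case (insert x F)
  then obtain \<delta> where d: "\<delta> > 0" "\<forall>b\<in>F. b < t \<longrightarrow> b \<le> t - \<delta>" by blast
  show ?case
  proof (cases "x < t")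
    case True
    then show ?thesis using d by (intro exI[of _ "min \<delta> (t - x)"]) auto
  next
    case False
    then show ?thesis using d by (intro exI[of _ \<delta>]) auto
  qed
qed

lemma rder:
  fixes g :: "real \<Rightarrow> real"
  assumes "(g has_real_derivative r) (at t within {t..})" "\<eta> > 0"
  shows "\<exists>\<delta>>0. \<forall>s. t < s \<and> s < t + \<delta> \<longrightarrow> \<bar>g s - g t - r * (s - t)\<bar> \<le> \<eta> * (s - t)"
proof -
  have "(g has_derivative (\<lambda>h. r * h)) (at t within {t..})"
    using assms(1) by (simp add: has_field_derivative_def)
  then obtain \<delta> where d: "\<delta> > 0" "\<forall>y\<in>{t..}. norm (y - t) < \<delta> \<longrightarrow> norm (g y - g t - r * (y - t)) \<le> \<eta> * norm (y - t)"
    using assms(2) unfolding has_derivative_within_alt by blast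
  show ?thesis
  proof (intro exI[of _ \<delta>] conjI allI impI)
    fix s assume s: "t < s \<and> s < t + \<delta>"
    then have "norm (g s - g t - r * (s - t)) \<le> \<eta> * norm (s - t)" using d by auto
    then show "\<bar>g s - g t - r * (s - t)\<bar> \<le> \<eta> * (s - t)" using s by simp
  qed (use d in auto)
qed

lemma cont_left:
  fixes g :: "real \<Rightarrow> 'a::real_normed_vector"
  assumes "continuous_on {0..} g" "t > 0" "\<eta> > 0"
  shows "\<exists>\<delta>>0. \<delta> \<le> t \<and> (\<forall>s. t - \<delta> < s \<and> s < t \<longrightarrow> norm (g s - g t) < \<eta>)"
proof -
  obtain \<delta> where d: "\<delta> > 0" "\<forall>s\<in>{0..}. dist s t < \<delta> \<longrightarrow> dist (g s) (g t) < \<eta>"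
    using assms continuous_on_iff[THEN iffD1, OF assms(1), rule_format, of t \<eta>] by auto
  show ?thesis
    by (intro exI[of _ "min \<delta> t"]) (use d assms in \<open>auto simp: dist_real_def dist_norm\<close>)
qed

locale traj =
  fixes X V :: "real \<Rightarrow> real^3" and B :: "real set"
  assumes Bpos: "B \<subseteq> {0<..}" and Bfin: "\<And>T. finite (B \<inter> {..T})"
    and Vconst: "\<And>s t. 0 \<le> s \<Longrightarrow> s \<le> t \<Longrightarrow> B \<inter> {s<..t} = {} \<Longrightarrow> V t = V s"
    and Xcont: "continuous_on {0..} X"
    and Xder: "\<And>s. s \<ge> 0 \<Longrightarrow> (X has_vector_derivative V s) (at s within {s..})"
begin

lemma right_const:
  assumes "t \<ge> 0"
  shows "\<exists>\<delta>>0. \<forall>s. t \<le> s \<and> s < t + \<delta> \<longrightarrow> V s = V t"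
proof -
  obtain \<delta> where d: "\<delta> > 0" "\<forall>b\<in>B \<inter> {..t+1}. b > t \<longrightarrow> t + \<delta> \<le> b"
    using gap_right[OF Bfin] by blast
  show ?thesis
  proof (intro exI[of _ "min \<delta> 1"] conjI allI impI)
    fix s assume s: "t \<le> s \<and> s < t + min \<delta> 1"
    have "B \<inter> {t<..s} = {}"
    proof (rule ccontr)
      assume "B \<inter> {t<..s} \<noteq> {}"
      then obtain b where "b \<in> B" "t < b" "b \<le> s" by auto
      then show False using d s by fastforce
    qed
    then show "V s = V t" using Vconst[of t s] s assms by auto
  qed (use d in auto)
qed

lemma left_const:
  assumes "t > 0"
  shows "\<exists>\<delta>>0. \<delta> \<le> t \<and> (\<forall>s s'. t - \<delta> < s \<and> s \<le> s' \<and> s' < t \<longrightarrow> V s' = V s)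
     \<and> (t \<notin> B \<longrightarrow> (\<forall>s. t - \<delta> < s \<and> s < t \<longrightarrow> V s = V t))"
proof -
  obtain \<delta> where d: "\<delta> > 0" "\<forall>b\<in>B \<inter> {..t}. b < t \<longrightarrow> b \<le> t - \<delta>"
    using gap_left[OF Bfin] by blast
  show ?thesis
  proof (intro exI[of _ "min \<delta> t"] conjI allI impI)
    fix s s' assume s: "t - min \<delta> t < s \<and> s \<le> s' \<and> s' < t"
    have "B \<inter> {s<..s'} = {}"
    proof (rule ccontr)
      assume "B \<inter> {s<..s'} \<noteq> {}"
      then obtain b where b: "b \<in> B" "s < b" "b \<le> s'" by auto
      then have "b \<le> t - \<delta>" using d(2) s by auto
      then show False using b s by linarith
    qed
    then show "V s' = V s" using Vconst[of s s'] s by auto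
  next
    fix s assume nb: "t \<notin> B" and s: "t - min \<delta> t < s \<and> s < t"
    have "B \<inter> {s<..t} = {}"
    proof (rule ccontr)
      assume "B \<inter> {s<..t} \<noteq> {}"
      then obtain b where b: "b \<in> B" "s < b" "b \<le> t" by auto
      then have "b < t" using nb by (cases "b = t") auto
      then have "b \<le> t - \<delta>" using d(2) b by auto
      then show False using b s by linarith
    qed
    then show "V s = V t" using Vconst[of s t] s by auto
  qed (use d assms in auto)
qed

lemma left_lim:
  assumes "t > 0" "(V \<longlongrightarrow> w) (at_left t)"
  shows "\<exists>\<delta>>0. \<delta> \<le> t \<and> (\<forall>s. t - \<delta> < s \<and> s < t \<longrightarrow> V s = w)"
proof -
  obtain \<delta> where d: "\<delta> > 0" "\<delta> \<le> t" "\<forall>s s'. t - \<delta> < s \<and> s \<le> s' \<and> s' < t \<longrightarrow> V s' = V s"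
    using left_const[OF assms(1)] by blast
  define c where "c = V (t - \<delta>/2)"
  have ev: "\<forall>s. t - \<delta>/2 \<le> s \<and> s < t \<longrightarrow> V s = c"
  proof (intro allI impI)
    fix s assume s: "t - \<delta>/2 \<le> s \<and> s < t"
    show "V s = c" unfolding c_def using d(3)[rule_format, of "t - \<delta>/2" s] d(1) s by linarith
  qed
  have "eventually (\<lambda>s. s \<in> {t - \<delta>/2<..<t}) (at_left t)"
    by (rule eventually_at_left_real) (use d in simp)
  then have "eventually (\<lambda>s. V s = c) (at_left t)"
    by (rule eventually_mono) (use ev in auto)
  then have "(V \<longlongrightarrow> c) (at_left t)" by (rule tendsto_eventually)
  then have "w = c" using assms(2) tendsto_unique[OF trivial_limit_at_left_real] by blast
  have "\<forall>s. t - \<delta>/2 < s \<and> s < t \<longrightarrow> V s = w" using ev \<open>w = c\<close> by auto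
  then show ?thesis using d by (intro exI[of _ "\<delta>/2"]) auto
qed

lemma comp_right:
  assumes "(F has_derivative D) (at (X t))" "t \<ge> 0"
  shows "((\<lambda>s. F (X s)) has_real_derivative D (V t)) (at t within {t..})"
proof -
  have "((F \<circ> X) has_vector_derivative D (V t)) (at t within {t..})"
    using vector_derivative_diff_chain_within[OF Xder[OF assms(2)] has_derivative_subset[OF assms(1)]] by simp
  then show ?thesis by (simp add: o_def has_real_derivative_iff_has_vector_derivative)
qed

end

locale tchart = traj X V B for X V :: "real \<Rightarrow> real^3" and B +
  fixes \<Omega> n d m1 x0 e1 e2 \<phi> i vM M
  assumes bs: "billiard_setting \<Omega> n d m1 x0 e1 e2 \<phi>" and i: "i < m1"
    and clos: "\<And>s. s \<ge> 0 \<Longrightarrow> X s \<in> closure \<Omega>"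
    and bounce: "\<And>b. b \<in> B \<Longrightarrow> X b \<in> frontier \<Omega> \<and>
        (\<exists>w. (V \<longlongrightarrow> w) (at_left b) \<and> V b = w - (2 * (w \<bullet> n (X b))) *\<^sub>R n (X b))"
    and vM: "norm (V 0) \<le> vM" "vM > 0"
    and x: "X 0 \<in> ball (x0 i) d"
    and M: "M \<ge> 0" "\<And>k u. norm u \<le> 4 * d \<Longrightarrow> norm (grad2 (\<lambda>w. grad2 (\<phi> i) w $ k) u) \<le> M"
begin

abbreviation "H \<equiv> Hc (x0 i) (e1 i) (e2 i) (n (x0 i)) (\<phi> i)"
abbreviation "N \<equiv> Nc (x0 i) (e1 i) (e2 i) (n (x0 i)) (\<phi> i)"
definition "K = 4 * M * vM^2 + 1"

lemma K_pos: "K \<ge> 1" using M vM by (simp add: K_def)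

lemma speed:
  assumes "t \<ge> 0"
  shows "norm (V t) = norm (V 0)"
proof -
  define f where "f s = \<bar>norm (V s) - norm (V 0)\<bar>" for s
  have "f t \<le> f 0"
  proof (rule rind[OF assms])
    fix s \<eta> :: real assume s: "0 \<le> s" "s < t" "\<eta> > 0"
    obtain \<delta> where d: "\<delta> > 0" "\<forall>s'. s \<le> s' \<and> s' < s + \<delta> \<longrightarrow> V s' = V s" using right_const[OF s(1)] by blast
    show "\<exists>\<delta>>0. \<forall>s'. s < s' \<and> s' < s + \<delta> \<longrightarrow> f s' \<le> f s + \<eta> * (s' - s)"
    proof (intro exI[of _ \<delta>] conjI allI impI)
      fix s' assume s': "s < s' \<and> s' < s + \<delta>"
      then have "s \<le> s' \<and> s' < s + \<delta>" by auto
      then have "V s' = V s" using d(2) by blast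
      then show "f s' \<le> f s + \<eta> * (s' - s)" using s s' unfolding f_def by simp
    qed (rule d(1))
  next
    fix s \<eta> :: real assume s: "0 < s" "s \<le> t" "\<eta> > 0"
    show "\<exists>\<delta>>0. \<forall>s'. s - \<delta> < s' \<and> s' < s \<longrightarrow> f s \<le> f s' + \<eta>"
    proof (cases "s \<in> B")
      case True
      obtain w where w: "(V \<longlongrightarrow> w) (at_left s)" "V s = w - (2 * (w \<bullet> n (X s))) *\<^sub>R n (X s)"
        "X s \<in> frontier \<Omega>" using bounce[OF True] by blast
      have "norm (V s) = norm w" using w(2) refl_norm[OF n_unit[OF bs w(3)]] by simp
      moreover obtain \<delta> where d: "\<delta> > 0" "\<forall>s'. s - \<delta> < s' \<and> s' < s \<longrightarrow> V s' = w"
        using left_lim[OF s(1) w(1)] by blast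
      ultimately show ?thesis
      proof (intro exI[of _ \<delta>] conjI allI impI)
        fix s' assume s': "s - \<delta> < s' \<and> s' < s"
        then have "V s' = w" using d(2) by blast
        then show "f s \<le> f s' + \<eta>" using s \<open>norm (V s) = norm w\<close> unfolding f_def by simp
      qed (rule d(1))
    next
      case False
      obtain \<delta> where d: "\<delta> > 0" "\<forall>s'. s - \<delta> < s' \<and> s' < s \<longrightarrow> V s' = V s"
        using left_const[OF s(1)] False by blast
      show ?thesis
      proof (intro exI[of _ \<delta>] conjI allI impI)
        fix s' assume s': "s - \<delta> < s' \<and> s' < s"
        then have "V s' = V s" using d(2) by blast
        then show "f s \<le> f s' + \<eta>" using s unfolding f_def by simp
      qed (rule d(1))
    qed
  qed
  then show ?thesis by (simp add: f_def)
qed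

lemma disp:
  assumes "t \<ge> 0"
  shows "norm (X t - X 0) \<le> norm (V 0) * t"
proof -
  define f where "f s = norm (X s - X 0) - norm (V 0) * s" for s
  have "f t \<le> f 0"
  proof (rule rind[OF assms])
    fix s \<eta> :: real assume s: "0 \<le> s" "s < t" "\<eta> > 0"
    have "(X has_derivative (\<lambda>h. h *\<^sub>R V s)) (at s within {s..})"
      using Xder[OF s(1)] by (simp add: has_vector_derivative_def)
    then obtain \<delta> where d: "\<delta> > 0" "\<forall>y\<in>{s..}. norm (y - s) < \<delta> \<longrightarrow> norm (X y - X s - (y - s) *\<^sub>R V s) \<le> \<eta> * norm (y - s)"
      using s(3) unfolding has_derivative_within_alt by blast
    show "\<exists>\<delta>>0. \<forall>s'. s < s' \<and> s' < s + \<delta> \<longrightarrow> f s' \<le> f s + \<eta> * (s' - s)"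
    proof (intro exI[of _ \<delta>] conjI allI impI)
      fix s' assume s': "s < s' \<and> s' < s + \<delta>"
      have a: "norm (X s' - X s - (s' - s) *\<^sub>R V s) \<le> \<eta> * (s' - s)" using d s' by auto
      have "norm (X s' - X s) \<le> norm ((s' - s) *\<^sub>R V s) + \<eta> * (s' - s)"
        using a norm_triangle_ineq2[of "X s' - X s" "(s' - s) *\<^sub>R V s"] by linarith
      also have "norm ((s' - s) *\<^sub>R V s) = (s' - s) * norm (V 0)" using speed[OF s(1)] s' by simp
      finally have "norm (X s' - X s) \<le> (s' - s) * norm (V 0) + \<eta> * (s' - s)" .
      moreover have "norm (X s' - X 0) \<le> norm (X s - X 0) + norm (X s' - X s)"
        using norm_triangle_ineq[of "X s - X 0" "X s' - X s"] by simp
      ultimately show "f s' \<le> f s + \<eta> * (s' - s)" by (simp add: f_def algebra_simps)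
    qed (use d in auto)
  next
    fix s \<eta> :: real assume s: "0 < s" "s \<le> t" "\<eta> > 0"
    obtain \<delta> where d: "\<delta> > 0" "\<delta> \<le> s" "\<forall>s'. s - \<delta> < s' \<and> s' < s \<longrightarrow> norm (X s' - X s) < \<eta>"
      using cont_left[OF Xcont s(1) s(3)] by blast
    show "\<exists>\<delta>>0. \<forall>s'. s - \<delta> < s' \<and> s' < s \<longrightarrow> f s \<le> f s' + \<eta>"
    proof (intro exI[of _ \<delta>] conjI allI impI)
      fix s' assume s': "s - \<delta> < s' \<and> s' < s"
      have "norm (X s - X 0) \<le> norm (X s' - X 0) + norm (X s' - X s)"
        using norm_triangle_ineq[of "X s' - X 0" "X s - X s'"] by (simp add: norm_minus_commute)
      moreover have "norm (V 0) * s' \<le> norm (V 0) * s" using s' by (simp add: mult_left_mono)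
      moreover have "norm (X s' - X s) < \<eta>" using d(3) s' by blast
      ultimately show "f s \<le> f s' + \<eta>" by (simp add: f_def)
    qed (use d in auto)
  qed
  then show ?thesis by (simp add: f_def)
qed

lemma inball:
  assumes "0 \<le> t" "t \<le> d / vM"
  shows "X t \<in> ball (x0 i) (2 * d)"
proof -
  have "norm (V 0) * t \<le> vM * (d / vM)" using vM assms by (intro mult_mono) auto
  then have "norm (X t - X 0) \<le> d" using disp[OF assms(1)] vM by simp
  moreover have "dist (x0 i) (X t) \<le> dist (x0 i) (X 0) + dist (X 0) (X t)" by (rule dist_triangle)
  moreover have "dist (X 0) (X t) = norm (X t - X 0)" by (simp add: dist_norm norm_minus_commute)
  ultimately show ?thesis using x by auto
qed

lemma orth: "orth3 (e1 i) (e2 i) (n (x0 i))" by (rule chart(1)[OF bs i])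
lemma C2: "C2_fun (\<phi> i)" by (rule chart(2)[OF bs i])
lemma e_unit: "norm (e1 i) = 1" "norm (e2 i) = 1" using orth by (auto simp: orth3_def)

lemma Uc_small:
  assumes "y \<in> ball (x0 i) (2 * d)"
  shows "norm (Uc (x0 i) (e1 i) (e2 i) y) \<le> 4 * d"
proof -
  have "norm (Uc (x0 i) (e1 i) (e2 i) y) \<le> \<bar>(y - x0 i) \<bullet> e1 i\<bar> + \<bar>(y - x0 i) \<bullet> e2 i\<bar>"
    using norm_le_l1_cart[of "Uc (x0 i) (e1 i) (e2 i) y"] by (simp add: sum_2)
  also have "\<dots> \<le> norm (y - x0 i) + norm (y - x0 i)"
    using Cauchy_Schwarz_ineq2[of "y - x0 i" "e1 i"] Cauchy_Schwarz_ineq2[of "y - x0 i" "e2 i"] e_unit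
    by (intro add_mono) auto
  also have "norm (y - x0 i) < 2 * d" using assms by (simp add: dist_norm norm_minus_commute)
  finally show ?thesis by simp
qed

lemma qrate:
  assumes "0 \<le> t" "t \<le> d / vM" "norm c \<le> vM"
  shows "\<exists>r. ((\<lambda>s. c \<bullet> N (X s)) has_real_derivative r) (at t within {t..}) \<and> \<bar>r\<bar> \<le> K - 1"
proof -
  let ?y = "X t"
  let ?U = "Uc (x0 i) (e1 i) (e2 i) ?y"
  obtain D where D: "((\<lambda>y. c \<bullet> N y) has_derivative D) (at ?y)"
    "\<forall>h. \<bar>D h\<bar> \<le> 2 * (norm (grad2 (\<lambda>w. grad2 (\<phi> i) w $ 1) ?U)
         + norm (grad2 (\<lambda>w. grad2 (\<phi> i) w $ 2) ?U)) * norm c * norm h"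
    using qN_deriv[OF C2_diff(2)[OF C2] C2_diff(2)[OF C2] e_unit, of c "x0 i" "n (x0 i)" "X t"] by blast
  have Us: "norm ?U \<le> 4 * d" using Uc_small[OF inball[OF assms(1,2)]] .
  have m: "norm (grad2 (\<lambda>w. grad2 (\<phi> i) w $ 1) ?U) + norm (grad2 (\<lambda>w. grad2 (\<phi> i) w $ 2) ?U) \<le> 2 * M"
    using M(2)[OF Us, of 1] M(2)[OF Us, of 2] by simp
  have vt: "norm (V t) \<le> vM" using speed[OF assms(1)] vM by simp
  have "\<bar>D (V t)\<bar> \<le> 2 * (2 * M) * vM * vM"
  proof -
    have "\<bar>D (V t)\<bar> \<le> 2 * (norm (grad2 (\<lambda>w. grad2 (\<phi> i) w $ 1) ?U)
         + norm (grad2 (\<lambda>w. grad2 (\<phi> i) w $ 2) ?U)) * norm c * norm (V t)" using D(2) by blast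
    also have "\<dots> \<le> 2 * (2 * M) * vM * vM"
      using m assms(3) vt M(1) vM(2) by (intro mult_mono) auto
    finally show ?thesis .
  qed
  then have "\<bar>D (V t)\<bar> \<le> K - 1" by (simp add: K_def power2_eq_square algebra_simps)
  moreover have "((\<lambda>s. c \<bullet> N (X s)) has_real_derivative D (V t)) (at t within {t..})"
    using comp_right[OF D(1) assms(1)] .
  ultimately show ?thesis by blast
qed

lemma Hrate:
  assumes "0 \<le> t"
  shows "((\<lambda>s. H (X s)) has_real_derivative - (V t \<bullet> N (X t))) (at t within {t..})"
  using comp_right[OF Hc_deriv[OF C2_diff(1)[OF C2]] assms] by simp

lemma qcont: "continuous_on {0..} (\<lambda>s. c \<bullet> N (X s))"
  by (intro continuous_on_inner continuous_on_const continuous_on_compose2[OF Nc_cont[OF C2] Xcont]) auto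

lemma Hcont: "continuous_on {0..} (\<lambda>s. H (X s))"
  by (rule continuous_on_compose2[OF Hc_cont[OF C2] Xcont]) auto

lemma ball2_3: "y \<in> ball (x0 i) (2 * d) \<Longrightarrow> y \<in> ball (x0 i) (3 * d)"
  using setting_basic(2)[OF bs] by auto

lemma H_front:
  assumes "0 \<le> t" "t \<le> d / vM" "X t \<in> frontier \<Omega>"
  shows "H (X t) = 0" "n (X t) = (1 / norm (N (X t))) *\<^sub>R N (X t)"
  using chart(4)[OF bs i assms(3) ball2_3[OF inball[OF assms(1,2)]]] by auto

lemma H_nonneg:
  assumes "0 \<le> t" "t \<le> d / vM"
  shows "H (X t) \<ge> 0"
  using Hc_closure[OF bs i clos[OF assms(1)] ball2_3[OF inball[OF assms(1,2)]]] .

lemma bounce_sign: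
  assumes b: "b \<in> B" "b \<le> d / vM" and w: "(V \<longlongrightarrow> w) (at_left b)"
  shows "w \<bullet> N (X b) \<ge> 0"
proof (rule ccontr)
  assume "\<not> w \<bullet> N (X b) \<ge> 0"
  then have cpos: "- (w \<bullet> N (X b)) > 0" by simp
  define c where "c = - (w \<bullet> N (X b))"
  have c: "c > 0" using cpos c_def by simp
  have b0: "b > 0" using Bpos b(1) by auto
  obtain \<delta>1 where d1: "\<delta>1 > 0" "\<delta>1 \<le> b" "\<forall>s. b - \<delta>1 < s \<and> s < b \<longrightarrow> V s = w"
    using left_lim[OF b0 w] by blast
  obtain \<delta>2 where d2: "\<delta>2 > 0" "\<delta>2 \<le> b" "\<forall>s. b - \<delta>2 < s \<and> s < b \<longrightarrow> norm (w \<bullet> N (X s) - w \<bullet> N (X b)) < c/2"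
    using cont_left[OF qcont b0, of "c/2" w] c by auto
  define a where "a = b - min \<delta>1 \<delta>2 / 2"
  have a: "0 \<le> a" "a < b" "b - \<delta>1 < a" "b - \<delta>2 < a" using d1 d2 by (auto simp: a_def)
  define f where "f s = - H (X s) + (c/2) * s" for s
  have "f b \<le> f a"
  proof (rule rind[of a b f])
    show "a \<le> b" using a by simp
  next
    fix s \<eta> :: real assume s: "a \<le> s" "s < b" "\<eta> > 0"
    have s0: "0 \<le> s" using a s by simp
    have Vs: "V s = w" using d1(3) a s by auto
    have gs: "w \<bullet> N (X s) < - c/2"
    proof -
      have "norm (w \<bullet> N (X s) - w \<bullet> N (X b)) < c/2" using d2(3) a s by auto
      then show ?thesis unfolding c_def by auto
    qed
    obtain \<delta> where d: "\<delta> > 0" "\<forall>s'. s < s' \<and> s' < s + \<delta> \<longrightarrow>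
        \<bar>H (X s') - H (X s) - (- (V s \<bullet> N (X s))) * (s' - s)\<bar> \<le> \<eta> * (s' - s)"
      using rder[OF Hrate[OF s0] s(3)] by blast
    show "\<exists>\<delta>>0. \<forall>s'. s < s' \<and> s' < s + \<delta> \<longrightarrow> f s' \<le> f s + \<eta> * (s' - s)"
    proof (intro exI[of _ \<delta>] conjI allI impI)
      fix s' assume s': "s < s' \<and> s' < s + \<delta>"
      have e: "\<bar>H (X s') - H (X s) - (- (w \<bullet> N (X s))) * (s' - s)\<bar> \<le> \<eta> * (s' - s)"
        using d(2) s' Vs by blast
      have "(c/2) * (s' - s) \<le> (- (w \<bullet> N (X s))) * (s' - s)"
        using gs s' by (intro mult_right_mono) auto
      moreover have "(c/2) * (s' - s) = (c/2) * s' - (c/2) * s" by (simp add: right_diff_distrib)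
      moreover have "H (X s') - H (X s) - (- (w \<bullet> N (X s))) * (s' - s) \<ge> - (\<eta> * (s' - s))"
        using e by (simp only: abs_le_iff) linarith
      ultimately show "f s' \<le> f s + \<eta> * (s' - s)" unfolding f_def by linarith
    qed (rule d(1))
  next
    fix s \<eta> :: real assume s: "a < s" "s \<le> b" "\<eta> > 0"
    have s0: "0 < s" using a s by simp
    obtain \<delta> where d: "\<delta> > 0" "\<delta> \<le> s" "\<forall>s'. s - \<delta> < s' \<and> s' < s \<longrightarrow> norm (H (X s') - H (X s)) < \<eta>/2"
      using cont_left[OF Hcont s0, of "\<eta>/2"] s by auto
    show "\<exists>\<delta>>0. \<forall>s'. s - \<delta> < s' \<and> s' < s \<longrightarrow> f s \<le> f s' + \<eta>"
    proof (intro exI[of _ "min \<delta> (\<eta> / c)"] conjI allI impI)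
      fix s' assume s': "s - min \<delta> (\<eta> / c) < s' \<and> s' < s"
      have h: "\<bar>H (X s') - H (X s)\<bar> < \<eta>/2" using d(3) s' by auto
      have "c * (s - s') < c * (\<eta> / c)" using s' c by (intro mult_strict_left_mono) auto
      then have "(c/2) * (s - s') < \<eta>/2" using c by simp
      moreover have "(c/2) * (s - s') = (c/2) * s - (c/2) * s'" by (simp add: right_diff_distrib)
      ultimately show "f s \<le> f s' + \<eta>" using h unfolding f_def abs_less_iff by linarith
    qed (use d c s in auto)
  qed
  moreover have "H (X b) = 0" using H_front(1)[of b] b bounce[OF b(1)] b0 by auto
  moreover have "H (X a) \<ge> 0" using H_nonneg[of a] a b by auto
  ultimately have "(c/2) * b \<le> (c/2) * a" unfolding f_def by simp
  then show False using a c by simp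
qed

lemma max0_lip: "\<bar>max (a::real) 0 - max b 0\<bar> \<le> \<bar>a - b\<bar>"
  by (simp add: max_def abs_if)

lemma N_ge1: "norm (N y) \<ge> 1"
  using Nc_bounds(1)[OF orth] chart(3)[OF bs i] by blast

lemma refl_q:
  assumes "norm (N y) \<ge> 1" and nn: "m = (1 / norm (N y)) *\<^sub>R N y" and a: "w \<bullet> N y \<ge> 0"
  shows "(w - (2 * (w \<bullet> m)) *\<^sub>R m) \<bullet> N y = - (w \<bullet> N y)"
    "norm (w - (2 * (w \<bullet> m)) *\<^sub>R m - v) \<le> norm (w - v) + 2 * (w \<bullet> N y)"
proof -
  let ?N = "N y"
  have np: "norm ?N > 0" using assms(1) by linarith
  have NN: "?N \<bullet> ?N = (norm ?N)^2" by (simp add: power2_norm_eq_inner)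
  have wm: "w \<bullet> m = (w \<bullet> ?N) / norm ?N" using nn by simp
  have mN: "m \<bullet> ?N = norm ?N" using nn NN np by (simp add: power2_eq_square)
  show "(w - (2 * (w \<bullet> m)) *\<^sub>R m) \<bullet> ?N = - (w \<bullet> ?N)"
    using np by (simp add: inner_diff_left mN wm)
  have mu: "norm m = 1" using nn np by simp
  have "norm (w - (2 * (w \<bullet> m)) *\<^sub>R m - v) \<le> norm (w - v) + norm ((2 * (w \<bullet> m)) *\<^sub>R m)"
    using norm_triangle_ineq4[of "w - v" "(2 * (w \<bullet> m)) *\<^sub>R m"] by (simp add: algebra_simps)
  also have "norm ((2 * (w \<bullet> m)) *\<^sub>R m) = 2 * ((w \<bullet> ?N) / norm ?N)" using mu wm a np by simp
  also have "(w \<bullet> ?N) / norm ?N \<le> w \<bullet> ?N" using a assms(1) by (simp add: divide_le_eq mult_le_cancel_left1)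
  finally show "norm (w - (2 * (w \<bullet> m)) *\<^sub>R m - v) \<le> norm (w - v) + 2 * (w \<bullet> ?N)" by simp
qed

definition "pot s = norm (V s - V 0) + 2 * max (V s \<bullet> N (X s)) 0 - 2 * K * s"

lemma potential:
  assumes t: "0 \<le> t" "t \<le> d / vM"
  shows "pot t \<le> pot 0"
proof (rule rind[of 0 t pot])
  show "0 \<le> t" by (rule t(1))
next
  fix s \<eta> :: real assume s: "0 \<le> s" "s < t" "\<eta> > 0"
  obtain \<delta>1 where d1: "\<delta>1 > 0" "\<forall>s'. s \<le> s' \<and> s' < s + \<delta>1 \<longrightarrow> V s' = V s"
    using right_const[OF s(1)] by blast
  have vs: "norm (V s) \<le> vM" using speed[OF s(1)] vM by simp
  obtain r where r: "((\<lambda>s'. V s \<bullet> N (X s')) has_real_derivative r) (at s within {s..})" "\<bar>r\<bar> \<le> K - 1"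
    using qrate[OF s(1) _ vs] s t by auto
  have e2: "\<eta> / 2 > 0" using s by simp
  obtain \<delta>2 where d2: "\<delta>2 > 0" "\<forall>s'. s < s' \<and> s' < s + \<delta>2 \<longrightarrow>
      \<bar>V s \<bullet> N (X s') - V s \<bullet> N (X s) - r * (s' - s)\<bar> \<le> \<eta> / 2 * (s' - s)"
    using rder[OF r(1) e2] by blast
  show "\<exists>\<delta>>0. \<forall>s'. s < s' \<and> s' < s + \<delta> \<longrightarrow> pot s' \<le> pot s + \<eta> * (s' - s)"
  proof (intro exI[of _ "min \<delta>1 \<delta>2"] conjI allI impI)
    fix s' assume s': "s < s' \<and> s' < s + min \<delta>1 \<delta>2"
    have "s \<le> s' \<and> s' < s + \<delta>1" using s' by auto
    then have Vs': "V s' = V s" using d1(2) by blast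
    have a: "\<bar>V s \<bullet> N (X s') - V s \<bullet> N (X s) - r * (s' - s)\<bar> \<le> \<eta> / 2 * (s' - s)"
      using d2(2) s' by auto
    have rb: "\<bar>r * (s' - s)\<bar> \<le> (K - 1) * (s' - s)"
      using r(2) s' by (simp add: abs_mult mult_right_mono)
    have "\<bar>max (V s \<bullet> N (X s')) 0 - max (V s \<bullet> N (X s)) 0\<bar> \<le> \<bar>V s \<bullet> N (X s') - V s \<bullet> N (X s)\<bar>"
      by (rule max0_lip)
    also have "\<dots> \<le> (K - 1) * (s' - s) + \<eta> / 2 * (s' - s)" using a rb by linarith
    finally have m: "max (V s \<bullet> N (X s')) 0 \<le> max (V s \<bullet> N (X s)) 0 + (K - 1) * (s' - s) + \<eta> / 2 * (s' - s)"
      by linarith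
    have eq1: "(K - 1) * (s' - s) = K * s' - K * s - (s' - s)" by (simp add: algebra_simps)
    have eq2: "\<eta> / 2 * (s' - s) = (\<eta> * (s' - s)) / 2" by simp
    show "pot s' \<le> pot s + \<eta> * (s' - s)"
      unfolding pot_def Vs' using m eq1 eq2 s' by linarith
  qed (use d1(1) d2(1) in auto)
next
  fix s \<eta> :: real assume s: "0 < s" "s \<le> t" "\<eta> > 0"
  have sd: "s \<le> d / vM" using s t by simp
  show "\<exists>\<delta>>0. \<forall>s'. s - \<delta> < s' \<and> s' < s \<longrightarrow> pot s \<le> pot s' + \<eta>"
  proof (cases "s \<in> B")
    case True
    obtain w where w: "(V \<longlongrightarrow> w) (at_left s)" "V s = w - (2 * (w \<bullet> n (X s))) *\<^sub>R n (X s)"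
      "X s \<in> frontier \<Omega>" using bounce[OF True] by blast
    have a: "w \<bullet> N (X s) \<ge> 0" by (rule bounce_sign[OF True sd w(1)])
    have nn: "n (X s) = (1 / norm (N (X s))) *\<^sub>R N (X s)" using H_front(2)[OF _ sd w(3)] s by simp
    note rq = refl_q[OF N_ge1 nn a]
    have q: "V s \<bullet> N (X s) = - (w \<bullet> N (X s))" using rq(1) w(2) by simp
    have vv: "norm (V s - V 0) \<le> norm (w - V 0) + 2 * (w \<bullet> N (X s))" using rq(2)[of "V 0"] w(2) by simp
    obtain \<delta>1 where d1: "\<delta>1 > 0" "\<delta>1 \<le> s" "\<forall>s'. s - \<delta>1 < s' \<and> s' < s \<longrightarrow> V s' = w"
      using left_lim[OF s(1) w(1)] by blast
    have e2: "\<eta> / 2 > 0" using s by simp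
    obtain \<delta>2 where d2: "\<delta>2 > 0" "\<delta>2 \<le> s" "\<forall>s'. s - \<delta>2 < s' \<and> s' < s \<longrightarrow> norm (w \<bullet> N (X s') - w \<bullet> N (X s)) < \<eta> / 2"
      using cont_left[OF qcont s(1) e2, of w] by blast
    show ?thesis
    proof (intro exI[of _ "min \<delta>1 \<delta>2"] conjI allI impI)
      fix s' assume s': "s - min \<delta>1 \<delta>2 < s' \<and> s' < s"
      have Vs': "V s' = w" using d1(3) s' by auto
      have c: "\<bar>w \<bullet> N (X s') - w \<bullet> N (X s)\<bar> < \<eta> / 2" using d2(3) s' by auto
      have "max (w \<bullet> N (X s')) 0 \<ge> w \<bullet> N (X s')" by simp
      moreover have "max (V s \<bullet> N (X s)) 0 = 0" using q a by simp
      moreover have "K * s' \<le> K * s" using s' K_pos by (intro mult_left_mono) auto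
      ultimately show "pot s \<le> pot s' + \<eta>"
        unfolding pot_def Vs' using vv c by linarith
    qed (use d1(1) d2(1) in auto)
  next
    case False
    obtain \<delta>1 where d1: "\<delta>1 > 0" "\<forall>s'. s - \<delta>1 < s' \<and> s' < s \<longrightarrow> V s' = V s"
      using left_const[OF s(1)] False by blast
    have e2: "\<eta> / 2 > 0" using s by simp
    obtain \<delta>2 where d2: "\<delta>2 > 0" "\<delta>2 \<le> s" "\<forall>s'. s - \<delta>2 < s' \<and> s' < s \<longrightarrow> norm (V s \<bullet> N (X s') - V s \<bullet> N (X s)) < \<eta> / 2"
      using cont_left[OF qcont s(1) e2, of "V s"] by blast
    show ?thesis
    proof (intro exI[of _ "min \<delta>1 \<delta>2"] conjI allI impI)
      fix s' assume s': "s - min \<delta>1 \<delta>2 < s' \<and> s' < s"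
      have "s - \<delta>1 < s' \<and> s' < s" using s' by auto
      then have Vs': "V s' = V s" using d1(2) by blast
      have c: "\<bar>V s \<bullet> N (X s') - V s \<bullet> N (X s)\<bar> < \<eta> / 2" using d2(3) s' by auto
      have "\<bar>max (V s \<bullet> N (X s)) 0 - max (V s \<bullet> N (X s')) 0\<bar> \<le> \<bar>V s \<bullet> N (X s) - V s \<bullet> N (X s')\<bar>"
        by (rule max0_lip)
      moreover have "K * s' \<le> K * s" using s' K_pos by (intro mult_left_mono) auto
      ultimately show "pot s \<le> pot s' + \<eta>"
        unfolding pot_def Vs' using c by linarith
    qed (use d1(1) d2(1) in auto)
  qed
qed

lemma init:
  assumes tau: "0 < \<tau>" "\<tau> \<le> d / vM" and inO: "\<forall>s\<in>{0..\<tau>}. X s \<in> \<Omega>"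
  shows "(V 0 \<bullet> N (X 0)) * \<tau> \<le> H (X 0) - H (X \<tau>) + K * \<tau>^2 / 2"
proof -
  define v where "v = V 0"
  define q0 where "q0 = v \<bullet> N (X 0)"
  have op: "open \<Omega>" by (rule setting_basic(1)[OF bs])
  have Vv: "V s = v" if "0 \<le> s" "s \<le> \<tau>" for s
  proof -
    have "B \<inter> {0<..s} = {}"
    proof (rule ccontr)
      assume "B \<inter> {0<..s} \<noteq> {}"
      then obtain b where b: "b \<in> B" "0 < b" "b \<le> s" by auto
      then have "X b \<in> frontier \<Omega>" using bounce by blast
      moreover have "X b \<in> \<Omega>" using inO b that by auto
      ultimately show False using op by (simp add: frontier_def interior_open)
    qed
    then show ?thesis using Vconst[of 0 s] that by (simp add: v_def)
  qed
  have vn: "norm v \<le> vM" using vM by (simp add: v_def)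
  have F1: "v \<bullet> N (X s) \<ge> q0 - K * s" if s: "0 \<le> s" "s \<le> \<tau>" for s
  proof -
    define f1 where "f1 u = - (v \<bullet> N (X u)) - K * u" for u
    have "f1 s \<le> f1 0"
    proof (rule rind[of 0 s f1])
      show "0 \<le> s" by (rule s(1))
    next
      fix u \<eta> :: real assume u: "0 \<le> u" "u < s" "\<eta> > 0"
      obtain r where r: "((\<lambda>s'. v \<bullet> N (X s')) has_real_derivative r) (at u within {u..})" "\<bar>r\<bar> \<le> K - 1"
        using qrate[OF u(1) _ vn] u s tau by auto
      obtain \<delta> where d: "\<delta> > 0" "\<forall>u'. u < u' \<and> u' < u + \<delta> \<longrightarrow>
          \<bar>v \<bullet> N (X u') - v \<bullet> N (X u) - r * (u' - u)\<bar> \<le> \<eta> * (u' - u)"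
        using rder[OF r(1) u(3)] by blast
      show "\<exists>\<delta>>0. \<forall>u'. u < u' \<and> u' < u + \<delta> \<longrightarrow> f1 u' \<le> f1 u + \<eta> * (u' - u)"
      proof (intro exI[of _ \<delta>] conjI allI impI)
        fix u' assume u': "u < u' \<and> u' < u + \<delta>"
        have a: "\<bar>v \<bullet> N (X u') - v \<bullet> N (X u) - r * (u' - u)\<bar> \<le> \<eta> * (u' - u)" using d(2) u' by blast
        have rb: "\<bar>r * (u' - u)\<bar> \<le> (K - 1) * (u' - u)"
          using r(2) u' by (simp add: abs_mult mult_right_mono)
        have eq1: "(K - 1) * (u' - u) = K * u' - K * u - (u' - u)" by (simp add: algebra_simps)
        show "f1 u' \<le> f1 u + \<eta> * (u' - u)" unfolding f1_def using a rb eq1 u' by linarith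
      qed (rule d(1))
    next
      fix u \<eta> :: real assume u: "0 < u" "u \<le> s" "\<eta> > 0"
      obtain \<delta> where d: "\<delta> > 0" "\<delta> \<le> u" "\<forall>u'. u - \<delta> < u' \<and> u' < u \<longrightarrow> norm (v \<bullet> N (X u') - v \<bullet> N (X u)) < \<eta>"
        using cont_left[OF qcont u(1) u(3), of v] by blast
      show "\<exists>\<delta>>0. \<forall>u'. u - \<delta> < u' \<and> u' < u \<longrightarrow> f1 u \<le> f1 u' + \<eta>"
      proof (intro exI[of _ \<delta>] conjI allI impI)
        fix u' assume u': "u - \<delta> < u' \<and> u' < u"
        have "\<bar>v \<bullet> N (X u') - v \<bullet> N (X u)\<bar> < \<eta>" using d(3) u' by auto
        moreover have "K * u' \<le> K * u" using u' K_pos by (intro mult_left_mono) auto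
        ultimately show "f1 u \<le> f1 u' + \<eta>" unfolding f1_def by linarith
      qed (rule d(1))
    qed
    then show ?thesis by (simp add: f1_def q0_def)
  qed
  define f2 where "f2 u = H (X u) + q0 * u - K * u^2 / 2" for u
  have "f2 \<tau> \<le> f2 0"
  proof (rule rind[of 0 \<tau> f2])
    show "0 \<le> \<tau>" using tau by simp
  next
    fix u \<eta> :: real assume u: "0 \<le> u" "u < \<tau>" "\<eta> > 0"
    have r: "((\<lambda>s. H (X s)) has_real_derivative - (v \<bullet> N (X u))) (at u within {u..})"
      using Hrate[OF u(1)] Vv[OF u(1)] u by simp
    obtain \<delta> where d: "\<delta> > 0" "\<forall>u'. u < u' \<and> u' < u + \<delta> \<longrightarrow>
        \<bar>H (X u') - H (X u) - (- (v \<bullet> N (X u))) * (u' - u)\<bar> \<le> \<eta> * (u' - u)"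
      using rder[OF r u(3)] by blast
    have g: "v \<bullet> N (X u) \<ge> q0 - K * u" using F1 u by simp
    show "\<exists>\<delta>>0. \<forall>u'. u < u' \<and> u' < u + \<delta> \<longrightarrow> f2 u' \<le> f2 u + \<eta> * (u' - u)"
    proof (intro exI[of _ \<delta>] conjI allI impI)
      fix u' assume u': "u < u' \<and> u' < u + \<delta>"
      have a: "\<bar>H (X u') - H (X u) - (- (v \<bullet> N (X u))) * (u' - u)\<bar> \<le> \<eta> * (u' - u)" using d(2) u' by blast
      have b: "(q0 - K * u) * (u' - u) \<le> (v \<bullet> N (X u)) * (u' - u)" using g u' by (intro mult_right_mono) auto
      have c: "K * u'^2 / 2 - K * u^2 / 2 \<ge> K * u * (u' - u)"
      proof -
        have "K * u'^2 / 2 - K * u^2 / 2 - K * u * (u' - u) = K * (u' - u)^2 / 2" by (simp add: power2_eq_square algebra_simps)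
        moreover have "K * (u' - u)^2 / 2 \<ge> 0" using K_pos by simp
        ultimately show ?thesis by linarith
      qed
      have eqs: "(q0 - K * u) * (u' - u) = q0 * u' - q0 * u - K * u * (u' - u)"
        "(- (v \<bullet> N (X u))) * (u' - u) = - ((v \<bullet> N (X u)) * (u' - u))" by (simp_all add: algebra_simps)
      show "f2 u' \<le> f2 u + \<eta> * (u' - u)" unfolding f2_def using a b c eqs by (simp only: abs_le_iff) linarith
    qed (rule d(1))
  next
    fix u \<eta> :: real assume u: "0 < u" "u \<le> \<tau>" "\<eta> > 0"
    have e2: "\<eta> / 2 > 0" using u by simp
    obtain \<delta> where d: "\<delta> > 0" "\<delta> \<le> u" "\<forall>u'. u - \<delta> < u' \<and> u' < u \<longrightarrow> norm (H (X u') - H (X u)) < \<eta> / 2"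
      using cont_left[OF Hcont u(1) e2] by blast
    define \<delta>' where "\<delta>' = min \<delta> (\<eta> / (2 * (\<bar>q0\<bar> + 1)))"
    have dp: "\<delta>' > 0" using d u by (simp add: \<delta>'_def)
    show "\<exists>\<delta>>0. \<forall>u'. u - \<delta> < u' \<and> u' < u \<longrightarrow> f2 u \<le> f2 u' + \<eta>"
    proof (intro exI[of _ \<delta>'] conjI allI impI dp)
      fix u' assume u': "u - \<delta>' < u' \<and> u' < u"
      have h: "\<bar>H (X u') - H (X u)\<bar> < \<eta> / 2" using d(3) u' by (auto simp: \<delta>'_def)
      have u'0: "0 \<le> u'" using u' d(2) by (auto simp: \<delta>'_def)
      have "u - u' < \<eta> / (2 * (\<bar>q0\<bar> + 1))" using u' by (auto simp: \<delta>'_def)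
      then have "(\<bar>q0\<bar> + 1) * (u - u') \<le> (\<bar>q0\<bar> + 1) * (\<eta> / (2 * (\<bar>q0\<bar> + 1)))"
        by (intro mult_left_mono) auto
      also have "\<dots> = \<eta> / 2"
      proof -
        have p: "\<bar>q0\<bar> + 1 > 0" by simp
        then show ?thesis by (simp add: field_simps)
      qed
      finally have qq: "(\<bar>q0\<bar> + 1) * (u - u') \<le> \<eta> / 2" .
      have "q0 * (u - u') \<le> \<bar>q0\<bar> * (u - u')" using u' by (intro mult_right_mono) auto
      moreover have "\<bar>q0\<bar> * (u - u') \<le> (\<bar>q0\<bar> + 1) * (u - u')" using u' by (intro mult_right_mono) auto
      moreover have "K * u'^2 \<le> K * u^2" using u' u'0 K_pos by (intro mult_left_mono power_mono) auto
      moreover have "q0 * (u - u') = q0 * u - q0 * u'" by (simp add: algebra_simps)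
      ultimately show "f2 u \<le> f2 u' + \<eta>" unfolding f2_def using h qq by linarith
    qed
  qed
  then show ?thesis by (simp add: f2_def q0_def v_def algebra_simps)
qed

end

lemma bound_M:
  assumes "C2_fun f"
  shows "\<exists>M\<ge>0. \<forall>k u. norm u \<le> R \<longrightarrow> norm (grad2 (\<lambda>w. grad2 f w $ k) u) \<le> M"
proof -
  have "\<exists>Mk. \<forall>u. norm u \<le> R \<longrightarrow> norm (grad2 (\<lambda>w. grad2 f w $ k) u) \<le> Mk" for k
  proof -
    have "continuous_on (cball 0 R) (\<lambda>u. grad2 (\<lambda>w. grad2 f w $ k) u)"
      using C2_diff(3)[OF assms, of k] continuous_on_subset by blast
    then have "compact ((\<lambda>u. grad2 (\<lambda>w. grad2 f w $ k) u) ` cball 0 R)"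
      by (intro compact_continuous_image) auto
    then have "bounded ((\<lambda>u. grad2 (\<lambda>w. grad2 f w $ k) u) ` cball 0 R)" by (rule compact_imp_bounded)
    then obtain a where "\<forall>x\<in>(\<lambda>u. grad2 (\<lambda>w. grad2 f w $ k) u) ` cball 0 R. norm x \<le> a"
      unfolding bounded_iff by blast
    then show ?thesis by (intro exI[of _ a]) auto
  qed
  then obtain M1 M2 where m1: "\<forall>u. norm u \<le> R \<longrightarrow> norm (grad2 (\<lambda>w. grad2 f w $ 1) u) \<le> M1"
    and m2: "\<forall>u. norm u \<le> R \<longrightarrow> norm (grad2 (\<lambda>w. grad2 f w $ 2) u) \<le> M2" by blast
  show ?thesis
  proof (intro exI[of _ "max 0 (max M1 M2)"] conjI allI impI)
    fix k :: 2 and u :: "real^2" assume u: "norm u \<le> R"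
    have "k = 1 \<or> k = 2" by (rule exhaust_2)
    then show "norm (grad2 (\<lambda>w. grad2 f w $ k) u) \<le> max 0 (max M1 M2)"
    proof
      assume "k = 1" then show ?thesis using m1 u by fastforce
    next
      assume "k = 2" then show ?thesis using m2 u by fastforce
    qed
  qed simp
qed

lemma infdist_pt:
  assumes "infdist x A < l" "A \<noteq> {}"
  shows "\<exists>z\<in>A. dist x z < l"
proof -
  have "Inf ((\<lambda>a. dist x a) ` A) < l" using assms by (simp add: infdist_notempty)
  then obtain r where "r \<in> (\<lambda>a. dist x a) ` A" "r < l" using cInf_lessD[of "(\<lambda>a. dist x a) ` A" l] assms(2) by blast
  then show ?thesis by auto
qed

theorem lemma2p7:
  fixes \<Omega> :: "(real^3) set" and n :: "real^3 \<Rightarrow> real^3" and d :: real and m1 :: nat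
    and x0 e1 e2 :: "nat \<Rightarrow> real^3" and \<phi> :: "nat \<Rightarrow> real^2 \<Rightarrow> real"
    and vM \<epsilon> :: real
  assumes "billiard_setting \<Omega> n d m1 x0 e1 e2 \<phi>"
    and "vM > 0" and "\<epsilon> > 0"
  shows "\<exists>t\<epsilon> > 0. \<forall>\<tau>2. 0 < \<tau>2 \<and> \<tau>2 \<le> t\<epsilon> \<longrightarrow>
           (\<exists>l > 0. \<forall>i<m1. \<forall>x v. x \<in> ball (x0 i) d \<and> v \<in> cball 0 vM \<longrightarrow>
              (\<forall>X V. billiard_traj \<Omega> n x v X V \<longrightarrow>
                 (\<forall>s\<in>{0..\<tau>2}. X s \<in> Omega_layer \<Omega> l \<inter> ball (x0 i) d) \<longrightarrow>
                 (\<forall>s\<in>{0..t\<epsilon>}. norm (V s - v) < \<epsilon>)))"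
proof -
  note bs = assms(1)
  note sb = setting_basic[OF bs]
  have "\<forall>i. \<exists>M. M \<ge> 0 \<and> (i < m1 \<longrightarrow> (\<forall>k u. norm u \<le> 4 * d \<longrightarrow> norm (grad2 (\<lambda>w. grad2 (\<phi> i) w $ k) u) \<le> M))"
  proof
    fix i
    show "\<exists>M. M \<ge> 0 \<and> (i < m1 \<longrightarrow> (\<forall>k u. norm u \<le> 4 * d \<longrightarrow> norm (grad2 (\<lambda>w. grad2 (\<phi> i) w $ k) u) \<le> M))"
    proof (cases "i < m1")
      case True
      then show ?thesis using bound_M[OF chart(2)[OF bs True], of "4 * d"] by blast
    next
      case False
      then show ?thesis by (intro exI[of _ 0]) simp
    qed
  qed
  then obtain Mf where Mf: "\<And>i. Mf i \<ge> 0"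
    "\<And>i k u. i < m1 \<Longrightarrow> norm u \<le> 4 * d \<Longrightarrow> norm (grad2 (\<lambda>w. grad2 (\<phi> i) w $ k) u) \<le> Mf i"
    by metis
  define Mt where "Mt = (\<Sum>i<m1. Mf i)"
  have Mt0: "Mt \<ge> 0" unfolding Mt_def by (intro sum_nonneg) (use Mf in auto)
  have MtI: "Mf i \<le> Mt" if "i < m1" for i
    unfolding Mt_def using that Mf(1) by (intro member_le_sum) auto
  define K where "K = 4 * Mt * vM^2 + 1"
  have K1: "K \<ge> 1" using Mt0 by (simp add: K_def)
  define te where "te = min (d / vM) (\<epsilon> / (8 * K))"
  have te0: "te > 0" using sb(2) assms(2,3) K1 by (simp add: te_def)
  have te1: "te \<le> d / vM" by (simp add: te_def)
  have Kte: "K * te \<le> \<epsilon> / 8"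
  proof -
    have "K * te \<le> K * (\<epsilon> / (8 * K))" using K1 by (intro mult_left_mono) (auto simp: te_def)
    also have "\<dots> = \<epsilon> / 8" using K1 by simp
    finally show ?thesis .
  qed
  show ?thesis
  proof (rule exI[of _ te], intro conjI te0 allI impI)
    fix \<tau>2 :: real assume tau: "0 < \<tau>2 \<and> \<tau>2 \<le> te"
    define l where "l = min (d / 2) (\<epsilon> * \<tau>2 / 32)"
    have l0: "l > 0" using sb(2) assms(3) tau by (simp add: l_def)
    show "\<exists>l>0. \<forall>i<m1. \<forall>x v. x \<in> ball (x0 i) d \<and> v \<in> cball 0 vM \<longrightarrow>
              (\<forall>X V. billiard_traj \<Omega> n x v X V \<longrightarrow>
                 (\<forall>s\<in>{0..\<tau>2}. X s \<in> Omega_layer \<Omega> l \<inter> ball (x0 i) d) \<longrightarrow>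
                 (\<forall>s\<in>{0..te}. norm (V s - v) < \<epsilon>))"
    proof (rule exI[of _ l], intro conjI l0 allI impI ballI)
      fix i x v X V s
      assume i: "i < m1" and xv: "x \<in> ball (x0 i) d \<and> v \<in> cball 0 vM"
        and tr: "billiard_traj \<Omega> n x v X V"
        and hyp: "\<forall>s\<in>{0..\<tau>2}. X s \<in> Omega_layer \<Omega> l \<inter> ball (x0 i) d"
        and s: "s \<in> {0..te}"
      have X0: "X 0 = x" and V0: "V 0 = v" and Xc: "continuous_on {0..} X"
        and cl: "\<forall>s\<ge>0. X s \<in> closure \<Omega>"
        and Xd: "\<forall>s\<ge>0. (X has_vector_derivative V s) (at s within {s..})"
        using tr unfolding billiard_traj_def by auto
      obtain B where B: "B \<subseteq> {0<..}" "\<forall>T. finite (B \<inter> {..T})"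
        "\<forall>s t. 0 \<le> s \<and> s \<le> t \<and> B \<inter> {s<..t} = {} \<longrightarrow> V t = V s"
        "\<forall>b\<in>B. X b \<in> frontier \<Omega> \<and>
           (\<exists>w. (V \<longlongrightarrow> w) (at_left b) \<and> V b = w - (2 * (w \<bullet> n (X b))) *\<^sub>R n (X b))"
        using tr unfolding billiard_traj_def by blast
      interpret T: tchart X V B \<Omega> n d m1 x0 e1 e2 \<phi> i vM Mt
      proof (unfold_locales)
        show "B \<subseteq> {0<..}" by (rule B(1))
        show "\<And>T. finite (B \<inter> {..T})" using B(2) by blast
        show "\<And>s t. 0 \<le> s \<Longrightarrow> s \<le> t \<Longrightarrow> B \<inter> {s<..t} = {} \<Longrightarrow> V t = V s" using B(3) by blast
        show "continuous_on {0..} X" by (rule Xc)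
        show "\<And>s. 0 \<le> s \<Longrightarrow> (X has_vector_derivative V s) (at s within {s..})" using Xd by blast
        show "billiard_setting \<Omega> n d m1 x0 e1 e2 \<phi>" by (rule bs)
        show "i < m1" by (rule i)
        show "\<And>s. 0 \<le> s \<Longrightarrow> X s \<in> closure \<Omega>" using cl by blast
        show "\<And>b. b \<in> B \<Longrightarrow> X b \<in> frontier \<Omega> \<and>
          (\<exists>w. (V \<longlongrightarrow> w) (at_left b) \<and> V b = w - (2 * (w \<bullet> n (X b))) *\<^sub>R n (X b))" using B(4) by blast
        show "norm (V 0) \<le> vM" using xv V0 by simp
        show "0 < vM" by (rule assms(2))
        show "X 0 \<in> ball (x0 i) d" using xv X0 by simp
        show "0 \<le> Mt" by (rule Mt0)
        fix k u assume "norm (u::real^2) \<le> 4 * d"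
        then have "norm (grad2 (\<lambda>w. grad2 (\<phi> i) w $ k) u) \<le> Mf i" by (rule Mf(2)[OF i])
        then show "norm (grad2 (\<lambda>w. grad2 (\<phi> i) w $ k) u) \<le> Mt" using MtI[OF i] by linarith
      qed
      have TK: "T.K = K" by (simp add: T.K_def K_def)
      let ?H = "Hc (x0 i) (e1 i) (e2 i) (n (x0 i)) (\<phi> i)"
      let ?N = "Nc (x0 i) (e1 i) (e2 i) (n (x0 i)) (\<phi> i)"
      define q0 where "q0 = v \<bullet> ?N x"
      have tau1: "\<tau>2 \<le> d / vM" using tau te1 by simp
      have inO: "\<forall>s\<in>{0..\<tau>2}. X s \<in> \<Omega>" using hyp by (auto simp: Omega_layer_def)
      have ini: "q0 * \<tau>2 \<le> ?H x - ?H (X \<tau>2) + K * \<tau>2^2 / 2"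
        using T.init[OF conjunct1[OF tau] tau1 inO] X0 V0 TK by (simp add: q0_def)
      have "\<tau>2 \<in> {0..\<tau>2}" using tau by simp
      then have Xt: "X \<tau>2 \<in> \<Omega>" "X \<tau>2 \<in> ball (x0 i) d" using hyp inO by auto
      have Hpos: "?H (X \<tau>2) > 0"
        using chart(5)[OF bs i Xt(1)] Xt(2) sb(2) by (auto simp: dist_norm)
      have Hx: "?H x < 2 * l"
      proof -
        have "x \<in> Omega_layer \<Omega> l" using hyp tau X0 by fastforce
        then have "infdist x (frontier \<Omega>) < l" by (simp add: Omega_layer_def)
        moreover have "frontier \<Omega> \<noteq> {}" using sb(5)[OF i] by blast
        ultimately obtain z where z: "z \<in> frontier \<Omega>" "dist x z < l" using infdist_pt by blast
        have "dist (x0 i) z \<le> dist (x0 i) x + dist x z" by (rule dist_triangle)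
        moreover have "dist (x0 i) x < d" using xv by simp
        moreover have "l \<le> d / 2" by (simp add: l_def)
        ultimately have "z \<in> ball (x0 i) (3 * d)" using z sb(2) by simp
        then have Hz: "?H z = 0" using chart(4)[OF bs i z(1)] by blast
        have "\<bar>?H x - ?H z\<bar> \<le> 2 * norm (x - z)"
          by (rule Hc_lip[OF chart(1)[OF bs i] chart(2)[OF bs i] chart(3)[OF bs i]])
        then show ?thesis using Hz z(2) by (simp add: dist_norm)
      qed
      have q0b: "q0 \<le> \<epsilon> / 8"
      proof -
        have "K * \<tau>2^2 / 2 \<le> (\<epsilon> / 8) * \<tau>2 / 2"
        proof -
          have "K * \<tau>2 \<le> K * te" using tau K1 by (intro mult_left_mono) auto
          then have "K * \<tau>2 \<le> \<epsilon> / 8" using Kte by simp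
          then have "(K * \<tau>2) * \<tau>2 \<le> (\<epsilon> / 8) * \<tau>2" using tau by (intro mult_right_mono) auto
          then show ?thesis by (simp add: power2_eq_square algebra_simps)
        qed
        moreover have "2 * l \<le> \<epsilon> * \<tau>2 / 16" by (simp add: l_def)
        ultimately have "q0 * \<tau>2 \<le> (\<epsilon> / 8) * \<tau>2" using ini Hpos Hx by simp
        then show ?thesis using tau by simp
      qed
      have s1: "0 \<le> s" "s \<le> d / vM" using s te1 by auto
      have "T.pot s \<le> T.pot 0" by (rule T.potential[OF s1])
      moreover have "T.pot 0 = 2 * max q0 0" by (simp add: T.pot_def X0 V0 q0_def)
      moreover have "T.pot s \<ge> norm (V s - v) - 2 * K * s" unfolding T.pot_def TK V0 by simp
      moreover have "K * s \<le> \<epsilon> / 8"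
      proof -
        have "K * s \<le> K * te" using s K1 by (intro mult_left_mono) auto
        then show ?thesis using Kte by simp
      qed
      moreover have "max q0 0 \<le> \<epsilon> / 8" using q0b assms(3) by simp
      ultimately show "norm (V s - v) < \<epsilon>" using assms(3) by linarith
    qed
  qed
qed

end
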